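(* Let $G\in\mathcal{G}^{\rm SSP}$ be a nonempty graph. Then the join $G\vee H$ belongs to $\mathcal{G}^{\rm SSP}$ whenever the graph $H$ satisfies one of the following: (a) $H\in\mathcal{G}^{\rm SSP}$; (b) the complement $H^c$ is a disjoint union of trees and unicyclic graphs whose cycles have odd length.
   Context: All graphs are finite, simple, undirected. The join $G\vee H$ is the disjoint union of $G$ and $H$ together with all edges joining a vertex of $G$ to a vertex of $H$. A unicyclic graph is a connected graph with exactly one cycle. For a graph $G$ on $\{1,\ldots,n\}$, $\mathcal{S}(G)$ is the set of real symmetric $n\times n$ matrices $A=(a_{ij})$ with $a_{ij}\neq0$ iff $\{i,j\}\in E(G)$ for $i\neq j$ (diagonal arbitrary). A real symmetric $A$ has the strong spectral property (SSP) if the only real symmetric $X$ with $A\circ X=0$, $I\circ X=0$, $AX-XA=0$ is $X=0$ ($\circ$ = entrywise product). $\mathcal{G}^{\rm SSP}$ is the set of graphs $G$ such that every matrix in $\mathcal{S}(G)$ has the SSP. *)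

theory Defs
  imports "HOL-Analysis.Analysis"
begin

definition sgraph :: "('v \<Rightarrow> 'v \<Rightarrow> bool) \<Rightarrow> bool" where
  "sgraph E \<longleftrightarrow> (\<forall>x y. E x y \<longrightarrow> E y x) \<and> (\<forall>x. \<not> E x x)"

definition S_graph :: "('n::finite \<Rightarrow> 'n \<Rightarrow> bool) \<Rightarrow> (real^'n^'n) set" where
  "S_graph E = {A. transpose A = A \<and>
                   (\<forall>i j. i \<noteq> j \<longrightarrow> (A $ i $ j \<noteq> 0 \<longleftrightarrow> E i j))}"

definition SSP :: "real^'n^'n \<Rightarrow> bool" where
  "SSP A \<longleftrightarrow> (\<forall>X :: real^'n^'n.
      transpose X = X \<and> (\<forall>i j. A $ i $ j * X $ i $ j = 0) \<and> (\<forall>i. X $ i $ i = 0)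
      \<and> A ** X - X ** A = 0 \<longrightarrow> X = 0)"

definition GSSP :: "('n::finite \<Rightarrow> 'n \<Rightarrow> bool) \<Rightarrow> bool" where
  "GSSP E \<longleftrightarrow> (\<forall>A \<in> S_graph E. SSP A)"

fun graph_join :: "('a \<Rightarrow> 'a \<Rightarrow> bool) \<Rightarrow> ('b \<Rightarrow> 'b \<Rightarrow> bool) \<Rightarrow> 'a + 'b \<Rightarrow> 'a + 'b \<Rightarrow> bool" where
  "graph_join G H (Inl x) (Inl y) = G x y"
| "graph_join G H (Inr x) (Inr y) = H x y"
| "graph_join G H (Inl x) (Inr y) = True"
| "graph_join G H (Inr x) (Inl y) = True"

definition graph_complement :: "('v \<Rightarrow> 'v \<Rightarrow> bool) \<Rightarrow> 'v \<Rightarrow> 'v \<Rightarrow> bool" where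
  "graph_complement E x y \<longleftrightarrow> x \<noteq> y \<and> \<not> E x y"

text \<open>Cycles, given by a cyclic list of distinct vertices of length at least 3;
the cycle as a subgraph is identified by its edge set.\<close>

definition is_cycle :: "('v \<Rightarrow> 'v \<Rightarrow> bool) \<Rightarrow> 'v list \<Rightarrow> bool" where
  "is_cycle E cs \<longleftrightarrow> length cs \<ge> 3 \<and> distinct cs \<and>
     (\<forall>i < length cs. E (cs ! i) (cs ! ((i + 1) mod length cs)))"

definition cycle_edges :: "'v list \<Rightarrow> 'v set set" where
  "cycle_edges cs = {{cs ! i, cs ! ((i + 1) mod length cs)} | i. i < length cs}"

definition component :: "('v \<Rightarrow> 'v \<Rightarrow> bool) \<Rightarrow> 'v \<Rightarrow> 'v set" where
  "component E x = {y. E\<^sup>*\<^sup>* x y}"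

definition tree_component :: "('v \<Rightarrow> 'v \<Rightarrow> bool) \<Rightarrow> 'v set \<Rightarrow> bool" where
  "tree_component E C \<longleftrightarrow> \<not> (\<exists>cs. is_cycle E cs \<and> set cs \<subseteq> C)"

definition odd_unicyclic_component :: "('v \<Rightarrow> 'v \<Rightarrow> bool) \<Rightarrow> 'v set \<Rightarrow> bool" where
  "odd_unicyclic_component E C \<longleftrightarrow>
     (\<exists>!S. \<exists>cs. is_cycle E cs \<and> set cs \<subseteq> C \<and> cycle_edges cs = S) \<and>
     (\<forall>cs. is_cycle E cs \<and> set cs \<subseteq> C \<longrightarrow> odd (length cs))"

definition trees_odd_unicyclic :: "('v \<Rightarrow> 'v \<Rightarrow> bool) \<Rightarrow> bool" where
  "trees_odd_unicyclic E \<longleftrightarrow>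
     (\<forall>x. tree_component E (component E x) \<or> odd_unicyclic_component E (component E x))"

end

theory Submission
  imports Defs
begin


definition nz :: "('v \<Rightarrow> 'v \<Rightarrow> real) \<Rightarrow> 'v \<Rightarrow> 'v \<Rightarrow> bool" where
  "nz y i j \<longleftrightarrow> y i j \<noteq> 0"

definition kpath :: "('v \<Rightarrow> 'v \<Rightarrow> bool) \<Rightarrow> 'v list \<Rightarrow> bool" where
  "kpath K P \<longleftrightarrow> distinct P \<and> 2 \<le> length P \<and> (\<forall>t. Suc t < length P \<longrightarrow> K (P!t) (P!Suc t))"

definition longest :: "('v::finite \<Rightarrow> 'v \<Rightarrow> bool) \<Rightarrow> 'v list \<Rightarrow> bool" where
  "longest K P \<longleftrightarrow> kpath K P \<and> (\<forall>Q. kpath K Q \<longrightarrow> length Q \<le> length P)"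

lemma longest_exists:
  fixes K :: "'v::finite \<Rightarrow> 'v \<Rightarrow> bool"
  assumes "kpath K P0" shows "\<exists>P. longest K P"
proof -
  have b: "\<forall>k. (\<exists>Q. kpath K Q \<and> length Q = k) \<longrightarrow> k < Suc CARD('v)"
  proof (intro allI impI)
    fix k assume "\<exists>Q. kpath K Q \<and> length Q = k"
    then obtain Q where "kpath K Q" "length Q = k" by blast
    then have "k = card (set Q)" by (simp add: kpath_def distinct_card)
    also have "\<dots> \<le> CARD('v)" by (rule card_mono) auto
    finally show "k < Suc CARD('v)" by simp
  qed
  obtain k where "\<exists>Q. kpath K Q \<and> length Q = k" and
    "\<forall>k'. (\<exists>Q. kpath K Q \<and> length Q = k') \<longrightarrow> k' \<le> k"
    using ex_has_greatest_nat[of "\<lambda>k. \<exists>Q. kpath K Q \<and> length Q = k" _ "\<lambda>k. k", OF _ b] assms by blast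
  then show ?thesis unfolding longest_def by blast
qed

lemma kpath_snoc:
  assumes "kpath K P" "K (last P) j" "j \<notin> set P" shows "kpath K (P @ [j])"
proof -
  have "length P \<ge> 2" using assms by (simp add: kpath_def)
  then have "P \<noteq> []" by auto
  then have l: "last P = P ! (length P - 1)" by (simp add: last_conv_nth)
  show ?thesis using assms unfolding kpath_def
    apply (auto simp: nth_append l less_Suc_eq)
    apply (subgoal_tac "t = length P - Suc 0")
     apply simp
    apply simp
    done
qed

lemma kpath_cons:
  assumes "kpath K P" "K j (P!0)" "j \<notin> set P" shows "kpath K (j # P)"
  using assms unfolding kpath_def
  by (auto simp: nth_Cons split: nat.splits)

context
  fixes F :: "'v::finite \<Rightarrow> 'v \<Rightarrow> bool" and y :: "'v \<Rightarrow> 'v \<Rightarrow> real"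
  assumes ysym: "\<And>i j. y i j = y j i" and ydiag: "\<And>i. y i i = 0"
    and ysupp: "\<And>i j. y i j \<noteq> 0 \<Longrightarrow> F i j"
    and yrow: "\<And>i. (\<Sum>j\<in>UNIV. y i j) = 0"
begin

lemma other_nb: assumes "nz y v a" shows "\<exists>b. b \<noteq> a \<and> nz y v b"
proof (rule ccontr)
  assume "\<not> ?thesis"
  then have "\<forall>b. b \<noteq> a \<longrightarrow> y v b = 0" by (auto simp: nz_def)
  then have "(\<Sum>j\<in>UNIV. y v j) = (\<Sum>j\<in>UNIV. if j = a then y v a else 0)" by (intro sum.cong) auto
  also have "\<dots> = y v a" by simp
  finally show False using yrow[of v] assms by (simp add: nz_def)
qed

lemma row2: assumes "a \<noteq> b" "\<forall>j. nz y v j \<longrightarrow> j = a \<or> j = b" shows "y v a + y v b = 0"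
proof -
  have "(\<Sum>j\<in>UNIV. y v j) = (\<Sum>j\<in>UNIV. (if j = a then y v a else 0) + (if j = b then y v b else 0))"
    using assms by (intro sum.cong) (auto simp: nz_def)
  also have "\<dots> = y v a + y v b" by (simp add: sum.distrib)
  finally show ?thesis using yrow[of v] by simp
qed

lemma kpath_reach: assumes "kpath (nz y) P" "t < length P" shows "F\<^sup>*\<^sup>* (P!0) (P!t)"
  using assms(2)
proof (induction t)
  case 0 then show ?case by simp
next
  case (Suc t)
  then have "F (P!t) (P!Suc t)" using assms(1) ysupp by (auto simp: kpath_def nz_def)
  with Suc show ?case by (meson Suc_lessD rtranclp.rtrancl_into_rtrancl)
qed

lemma component_sub: assumes "kpath (nz y) P" shows "set P \<subseteq> component F (P!0)"
  using kpath_reach[OF assms] by (auto simp: component_def in_set_conv_nth)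

lemma cycle_end:
  assumes L: "longest (nz y) P" and n: "n = length P"
    and j: "nz y (P!(n-1)) j" "j \<noteq> P!(n-2)"
  shows "\<exists>m. m + 3 \<le> n \<and> j = P!m \<and> is_cycle F (drop m P)"
proof -
  have kp: "kpath (nz y) P" using L by (simp add: longest_def)
  have n2: "2 \<le> n" using kp n by (simp add: kpath_def)
  have "P \<noteq> []" using n n2 by auto
  then have lastP: "last P = P!(n-1)" using n by (simp add: last_conv_nth)
  have "j \<in> set P"
  proof (rule ccontr)
    assume "j \<notin> set P"
    then have "kpath (nz y) (P@[j])" using kp j lastP kpath_snoc by metis
    then have "length (P@[j]) \<le> length P" using L unfolding longest_def by blast
    then show False by simp
  qed
  then obtain m where m: "m < n" "j = P!m" by (auto simp: in_set_conv_nth n)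
  have "m \<noteq> n-1" using j(1) m ydiag by (auto simp: nz_def)
  moreover have "m \<noteq> n-2" using j(2) m by auto
  ultimately have m3: "m + 3 \<le> n" using m n2 by linarith
  have "is_cycle F (drop m P)"
    unfolding is_cycle_def
  proof (intro conjI allI impI)
    show "3 \<le> length (drop m P)" using m3 n by simp
    show "distinct (drop m P)" using kp by (simp add: kpath_def)
    fix i assume i: "i < length (drop m P)"
    show "F (drop m P ! i) (drop m P ! ((i+1) mod length (drop m P)))"
    proof (cases "i + 1 < length (drop m P)")
      case True
      then have "F (P!(m+i)) (P!Suc (m+i))" using kp ysupp n by (auto simp: kpath_def nz_def)
      with True show ?thesis using n m by simp
    next
      case False
      then have e: "i + 1 = length (drop m P)" using i by simp
      then have "(i+1) mod length (drop m P) = 0" by simp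
      moreover have "m + i = n - 1" using e n m3 by simp
      ultimately show ?thesis using j m ysupp n by (auto simp: nz_def)
    qed
  qed
  with m m3 show ?thesis by blast
qed

lemma cycle_start:
  assumes L: "longest (nz y) P" and n: "n = length P"
    and j: "nz y (P!0) j" "j \<noteq> P!1"
  shows "\<exists>i. 2 \<le> i \<and> i < n \<and> j = P!i \<and> is_cycle F (take (Suc i) P)"
proof -
  have kp: "kpath (nz y) P" using L by (simp add: longest_def)
  have n2: "2 \<le> n" using kp n by (simp add: kpath_def)
  have "j \<in> set P"
  proof (rule ccontr)
    assume "j \<notin> set P"
    moreover have "nz y j (P!0)" using j ysym by (simp add: nz_def)
    ultimately have "kpath (nz y) (j#P)" using kp kpath_cons by metis
    then have "length (j#P) \<le> length P" using L unfolding longest_def by blast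
    then show False by simp
  qed
  then obtain i where i: "i < n" "j = P!i" by (auto simp: in_set_conv_nth n)
  have "i \<noteq> 0"
  proof
    assume "i = 0" then show False using j(1) i ydiag by (simp add: nz_def)
  qed
  moreover have "i \<noteq> 1" using j(2) i by auto
  ultimately have i2: "2 \<le> i" by linarith
  have "is_cycle F (take (Suc i) P)"
    unfolding is_cycle_def
  proof (intro conjI allI impI)
    show "3 \<le> length (take (Suc i) P)" using i2 i n by simp
    show "distinct (take (Suc i) P)" using kp by (simp add: kpath_def)
    fix k assume k: "k < length (take (Suc i) P)"
    show "F (take (Suc i) P ! k) (take (Suc i) P ! ((k+1) mod length (take (Suc i) P)))"
    proof (cases "k + 1 < length (take (Suc i) P)")
      case True
      then have "F (P!k) (P!Suc k)" using kp ysupp n by (auto simp: kpath_def nz_def)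
      with True show ?thesis using n i by simp
    next
      case False
      then have e: "k + 1 = length (take (Suc i) P)" using k i n by auto
      then have "(k+1) mod length (take (Suc i) P) = 0" by simp
      moreover have "k = i" using e n i by simp
      moreover have "F (P!i) (P!0)" using j i ysupp ysym by (metis nz_def)
      ultimately show ?thesis using i n by simp
    qed
  qed
  with i i2 show ?thesis by blast
qed

lemma endpoint:
  assumes L: "longest (nz y) P" and n: "n = length P"
    and U: "odd_unicyclic_component F C" and PC: "set P \<subseteq> C"
    and j: "nz y (P!(n-1)) j" "j \<noteq> P!(n-2)"
  shows "j = P!0"
proof -
  have kp: "kpath (nz y) P" using L by (simp add: longest_def)
  have n2: "2 \<le> n" using kp n by (simp add: kpath_def)
  obtain m where m: "m+3 \<le> n" "j = P!m" and c1: "is_cycle F (drop m P)"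
    using cycle_end[OF L n j] by blast
  have "nz y (P!0) (P!1)" using kp n2 n by (auto simp: kpath_def)
  then obtain j' where "j' \<noteq> P!1" "nz y (P!0) j'" using other_nb by blast
  then obtain i where i: "2 \<le> i" "i < n" and c2: "is_cycle F (take (Suc i) P)"
    using cycle_start[OF L n] by blast
  have sub1: "set (drop m P) \<subseteq> C" by (rule subset_trans[OF set_drop_subset PC])
  have sub2: "set (take (Suc i) P) \<subseteq> C" by (rule subset_trans[OF set_take_subset PC])
  have "\<exists>!S. \<exists>cs. is_cycle F cs \<and> set cs \<subseteq> C \<and> cycle_edges cs = S"
    using U by (simp add: odd_unicyclic_component_def)
  then have eq: "cycle_edges (drop m P) = cycle_edges (take (Suc i) P)"
    using c1 c2 sub1 sub2 by blast
  have "{P!0,P!1} = {take (Suc i) P ! 0, take (Suc i) P ! ((0+1) mod length (take (Suc i) P))}"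
    using i n by simp
  moreover have "0 < length (take (Suc i) P)" using i n by simp
  ultimately have "{P!0, P!1} \<in> cycle_edges (take (Suc i) P)"
    unfolding cycle_edges_def by blast
  then have "{P!0, P!1} \<in> cycle_edges (drop m P)" using eq by simp
  then obtain k where k: "k < n - m"
    "{P!0,P!1} = {P!(m+k), P!(m + (k+1) mod (n-m))}"
    using n m by (auto simp: cycle_edges_def)
  then have "P!0 = P!(m+k) \<or> P!0 = P!(m + (k+1) mod (n-m))" by (auto simp: doubleton_eq_iff)
  moreover have "(k+1) mod (n-m) < n - m" using m by simp
  then have "m + (k+1) mod (n-m) < n" by linarith
  moreover have "m + k < n" using k m by auto
  moreover have inj: "a = 0" if "a < n" "P!0 = P!a" for a
  proof -
    have "distinct P" using kp by (simp add: kpath_def)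
    moreover have "0 < length P" using n n2 by linarith
    ultimately show ?thesis using nth_eq_iff_index_eq[of P 0 a] that n by simp
  qed
  ultimately have "m = 0" by (metis add_is_0)
  then show ?thesis using m by simp
qed

lemma last_edge:
  assumes kp: "kpath (nz y) P" and n_def: "n = length P"
  shows "nz y (P!(n-1)) (P!(n-2))"
proof -
  have n2: "2 \<le> n" using kp n_def by (simp add: kpath_def)
  have "Suc (n-2) < length P" using n2 n_def by simp
  then have "nz y (P!(n-2)) (P!Suc (n-2))" using kp unfolding kpath_def by blast
  moreover have "Suc (n-2) = n-1" using n2 by simp
  ultimately have "nz y (P!(n-2)) (P!(n-1))" by simp
  then show ?thesis unfolding nz_def using ysym[of "P!(n-2)" "P!(n-1)"] by simp
qed

lemma closes:
  assumes L: "longest (nz y) P" and U: "odd_unicyclic_component F C" and PC: "set P \<subseteq> C"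
  shows "nz y (last P) (P!0)"
proof -
  define n where "n = length P"
  have kp: "kpath (nz y) P" using L by (simp add: longest_def)
  have n2: "2 \<le> n" using kp n_def by (simp add: kpath_def)
  have "P \<noteq> []" using n2 n_def by auto
  then have lastP: "last P = P!(n-1)" using n_def by (simp add: last_conv_nth)
  have "nz y (P!(n-1)) (P!(n-2))" using last_edge[OF kp n_def] .
  then obtain j where j: "j \<noteq> P!(n-2)" "nz y (P!(n-1)) j" using other_nb by blast
  have "j = P!0" using endpoint[OF L n_def U PC j(2) j(1)] .
  then show ?thesis using lastP j(2) by simp
qed

lemma rot1:
  assumes L: "longest (nz y) P" and U: "odd_unicyclic_component F C" and PC: "set P \<subseteq> C"
  shows "longest (nz y) (rotate1 P)"
proof -
  define n where "n = length P"
  have kp: "kpath (nz y) P" using L by (simp add: longest_def)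
  have n2: "2 \<le> n" using kp n_def by (simp add: kpath_def)
  have "P \<noteq> []" using n2 n_def by auto
  then have lastP: "last P = P!(n-1)" using n_def by (simp add: last_conv_nth)
  have cl: "nz y (P!(n-1)) (P!0)" using closes[OF L U PC] lastP by simp
  have "kpath (nz y) (rotate1 P)"
    unfolding kpath_def
  proof (intro conjI allI impI)
    show "distinct (rotate1 P)" using kp by (simp add: kpath_def)
    show "2 \<le> length (rotate1 P)" using n2 n_def by simp
    fix t assume t: "Suc t < length (rotate1 P)"
    then have e: "rotate1 P ! t = P ! (Suc t mod n)" "rotate1 P ! Suc t = P ! (Suc (Suc t) mod n)"
      using n_def by (simp_all add: nth_rotate1)
    show "nz y (rotate1 P ! t) (rotate1 P ! Suc t)"
    proof (cases "Suc (Suc t) < n")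
      case True
      then show ?thesis using e kp n_def by (simp add: kpath_def)
    next
      case False
      then have "Suc (Suc t) = n" using t n_def by simp
      then have "Suc t mod n = n - 1" "Suc (Suc t) mod n = 0" by auto
      then show ?thesis using e cl by simp
    qed
  qed
  then show ?thesis using L by (simp add: longest_def)
qed

lemma rot:
  assumes L: "longest (nz y) P" and U: "odd_unicyclic_component F C" and PC: "set P \<subseteq> C"
  shows "longest (nz y) (rotate t P)"
proof (induction t)
  case 0 then show ?case using L by simp
next
  case (Suc t)
  then show ?case using rot1[OF Suc.IH U] PC by simp
qed

lemma no_longest_unicyclic:
  assumes L: "longest (nz y) P" and U: "odd_unicyclic_component F C" and PC: "set P \<subseteq> C"
  shows False
proof -
  define n where "n = length P"
  have kp: "kpath (nz y) P" using L by (simp add: longest_def)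
  have n2: "2 \<le> n" using kp n_def by (simp add: kpath_def)
  have dP: "distinct P" using kp by (simp add: kpath_def)
  have "nz y (P!(n-1)) (P!(n-2))" using last_edge[OF kp n_def] .
  then obtain j where j: "j \<noteq> P!(n-2)" "nz y (P!(n-1)) j" using other_nb by blast
  have j0: "j = P!0" using endpoint[OF L n_def U PC j(2) j(1)] .
  obtain m where m: "m + 3 \<le> n" "j = P!m" "is_cycle F (drop m P)" using cycle_end[OF L n_def j(2) j(1)] by blast
  have "m < length P" "0 < length P" using m(1) n_def by auto
  then have "m = 0" using m j0 dP nth_eq_iff_index_eq[of P 0 m] by auto
  then have cyc: "is_cycle F P" and n3: "3 \<le> n" using m by auto
  have oddn: "odd n" using U cyc PC n_def by (auto simp: odd_unicyclic_component_def)
  define c where "c t = y (P!(t mod n)) (P!(Suc t mod n))" for t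
  have step: "c t + c (Suc t) = 0" for t
  proof -
    define R where "R = rotate (t+2) P"
    have LR: "longest (nz y) R" unfolding R_def by (rule rot[OF L U PC])
    have lR: "length R = n" using R_def n_def by simp
    have RC: "set R \<subseteq> C" using PC R_def by simp
    have n0: "0 < n" using n3 by simp
    have rk: "R ! k = P ! ((t+2+k) mod n)" if "k < n" for k
    proof -
      have "k < length P" using that n_def by simp
      then have "rotate (t+2) P ! k = P ! ((t+2+k) mod length P)" by (rule nth_rotate)
      then show ?thesis by (simp only: R_def n_def)
    qed
    have r1: "R!(n-1) = P!(Suc t mod n)"
    proof -
      have "R!(n-1) = P!((t+2+(n-1)) mod n)" using rk n3 by simp
      also have "(t+2+(n-1)) = Suc t + n" using n3 by simp
      finally show ?thesis by (metis mod_add_self2)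
    qed
    have r2: "R!(n-2) = P!(t mod n)"
    proof -
      have "R!(n-2) = P!((t+2+(n-2)) mod n)" using rk n3 by simp
      also have "(t+2+(n-2)) = t + n" using n3 by simp
      finally show ?thesis by simp
    qed
    have r0: "R!0 = P!(Suc (Suc t) mod n)" using rk[of 0] n3 by simp
    have nb: "\<forall>j. nz y (R!(n-1)) j \<longrightarrow> j = R!(n-2) \<or> j = R!0"
      using endpoint[OF LR lR[symmetric] U RC] by blast
    have "distinct R" using dP R_def by simp
    then have "R!(n-2) \<noteq> R!0" using n3 lR by (simp add: nth_eq_iff_index_eq)
    from row2[OF this nb] have "y (R!(n-1)) (R!(n-2)) + y (R!(n-1)) (R!0) = 0" .
    then show ?thesis unfolding c_def using r1 r2 r0 ysym[of "P!(t mod n)" "P!(Suc t mod n)"] by simp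
  qed
  have alt: "c t = (-1)^t * c 0" for t
  proof (induction t)
    case 0 then show ?case by simp
  next
    case (Suc t) then show ?case using step[of t] by simp
  qed
  have sm: "Suc n mod n = Suc 0 mod n" using mod_add_self2[of 1 n] by simp
  have cn: "c n = c 0" unfolding c_def using sm by simp
  have "((-1::real)^n) = -1" using oddn by simp
  then have "c n = - c 0" using alt[of n] by simp
  then have "c 0 = - c 0" using cn by linarith
  then have "c 0 = 0" by simp
  moreover have "c 0 = y (P!0) (P!1)" unfolding c_def using n3 by simp
  moreover have "nz y (P!0) (P!1)" using kp n2 n_def by (simp add: kpath_def)
  ultimately show False by (simp add: nz_def)
qed

lemma y_zero:
  assumes T: "trees_odd_unicyclic F" shows "y i j = 0"
proof (rule ccontr)
  assume a: "y i j \<noteq> 0"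
  then have "i \<noteq> j" using ydiag by auto
  then have "kpath (nz y) [i,j]" using a by (auto simp: kpath_def nz_def less_Suc_eq)
  then obtain P where L: "longest (nz y) P" using longest_exists by blast
  have kp: "kpath (nz y) P" using L by (simp add: longest_def)
  define C where "C = component F (P!0)"
  have PC: "set P \<subseteq> C" using component_sub[OF kp] C_def by simp
  from T have "tree_component F C \<or> odd_unicyclic_component F C"
    unfolding trees_odd_unicyclic_def C_def by blast
  then show False
  proof
    assume U: "odd_unicyclic_component F C"
    show False using no_longest_unicyclic[OF L U PC] .
  next
    assume Tr: "tree_component F C"
    define n where "n = length P"
    have n2: "2 \<le> n" using kp n_def by (simp add: kpath_def)
    have "nz y (P!(n-1)) (P!(n-2))" using last_edge[OF kp n_def] .
    then obtain j where j: "j \<noteq> P!(n-2)" "nz y (P!(n-1)) j" using other_nb by blast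
    obtain m where m: "is_cycle F (drop m P)" using cycle_end[OF L n_def j(2) j(1)] by blast
    have "set (drop m P) \<subseteq> C" by (rule subset_trans[OF set_drop_subset PC])
    then show False using m Tr unfolding tree_component_def by blast
  qed
qed

end



lemma sum_UNIV_plus:
  "(\<Sum>k\<in>(UNIV::('a::finite + 'b::finite) set). f k) = (\<Sum>k\<in>UNIV. f (Inl k)) + (\<Sum>k\<in>UNIV. f (Inr k))"
proof -
  have "sum f (UNIV <+> UNIV) = (\<Sum>k\<in>UNIV. f (Inl k)) + (\<Sum>k\<in>UNIV. f (Inr k))"
    by (simp only: sum.Plus[OF finite finite] o_def)
  then show ?thesis by (metis UNIV_Plus_UNIV)
qed

lemma mat_mult_nth: "(A ** B) $ i $ j = (\<Sum>k\<in>UNIV. A $ i $ k * B $ k $ j)"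
  by (simp add: matrix_matrix_mult_def)

theorem corollary5p2:
  fixes G :: "'a::finite \<Rightarrow> 'a \<Rightarrow> bool" and H :: "'b::finite \<Rightarrow> 'b \<Rightarrow> bool"
  assumes "sgraph G" and "sgraph H"
    and "GSSP G"
    and "\<exists>x y. G x y"
    and "GSSP H \<or> trees_odd_unicyclic (graph_complement H)"
  shows "GSSP (graph_join G H)"
  unfolding GSSP_def
proof
  fix A assume A: "A \<in> S_graph (graph_join G H)"
  have AT: "A$i$j = A$j$i" for i j
  proof -
    have "transpose A $ i $ j = A $ i $ j" using A by (simp add: S_graph_def)
    then show ?thesis by (simp add: transpose_def)
  qed
  have Asupp: "i \<noteq> j \<Longrightarrow> (A$i$j \<noteq> 0 \<longleftrightarrow> graph_join G H i j)" for i j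
    using A by (simp add: S_graph_def)
  show "SSP A" unfolding SSP_def
  proof (intro allI impI)
    fix X :: "real^('a+'b)^('a+'b)"
    assume H0: "transpose X = X \<and> (\<forall>i j. A$i$j * X$i$j = 0) \<and> (\<forall>i. X$i$i = 0) \<and> A ** X - X ** A = 0"
    have XT: "X$i$j = X$j$i" for i j
    proof -
      have "transpose X $ i $ j = X $ i $ j" using H0 by simp
      then show ?thesis by (simp add: transpose_def)
    qed
    have XA: "A$i$j * X$i$j = 0" for i j using H0 by blast
    have Xd: "X$i$i = 0" for i using H0 by blast
    have comm: "(\<Sum>k\<in>UNIV. A$i$k * X$k$j) = (\<Sum>k\<in>UNIV. X$i$k * A$k$j)" for i j
    proof -
      have "A ** X = X ** A" using H0 by simp
      then have "(A ** X)$i$j = (X ** A)$i$j" by simp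
      then show ?thesis by (simp add: mat_mult_nth)
    qed
    have cross1: "X$Inl a$Inr b = 0" for a b
    proof -
      have "A$Inl a$Inr b \<noteq> 0" using Asupp[of "Inl a" "Inr b"] by simp
      then show ?thesis using XA[of "Inl a" "Inr b"] by simp
    qed
    have cross2: "X$Inr b$Inl a = 0" for a b using cross1 XT by metis
    define A1 :: "real^'a^'a" where "A1 = (\<chi> i j. A$Inl i$Inl j)"
    define X1 :: "real^'a^'a" where "X1 = (\<chi> i j. X$Inl i$Inl j)"
    have A1S: "A1 \<in> S_graph G"
      unfolding S_graph_def
    proof (intro CollectI conjI allI impI)
      show "transpose A1 = A1" by (simp add: vec_eq_iff transpose_def A1_def AT)
      fix i j :: 'a assume "i \<noteq> j"
      then show "(A1$i$j \<noteq> 0) = G i j" using Asupp[of "Inl i" "Inl j"] by (simp add: A1_def)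
    qed
    have "SSP A1" using assms(3) A1S by (simp add: GSSP_def)
    moreover have "transpose X1 = X1" by (simp add: vec_eq_iff transpose_def X1_def XT)
    moreover have "\<forall>i j. A1$i$j * X1$i$j = 0" by (simp add: A1_def X1_def XA)
    moreover have "\<forall>i. X1$i$i = 0" by (simp add: X1_def Xd)
    moreover have "A1 ** X1 - X1 ** A1 = 0"
    proof -
      have "(A1 ** X1)$i$j = (X1 ** A1)$i$j" for i j
        using comm[of "Inl i" "Inl j"]
        by (simp add: mat_mult_nth sum_UNIV_plus A1_def X1_def cross1 cross2)
      then show ?thesis by (simp add: vec_eq_iff)
    qed
    ultimately have "X1 = 0" unfolding SSP_def by blast
    then have X1z: "X$Inl a$Inl b = 0" for a b
      by (metis X1_def vec_lambda_beta zero_index)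
    obtain a0 :: 'a where True by blast
    define w where "w k = A$Inl a0$Inr k" for k
    have wnz: "w k \<noteq> 0" for k using Asupp[of "Inl a0" "Inr k"] by (simp add: w_def)
    have BX: "(\<Sum>k\<in>UNIV. w k * X$Inr k$Inr j) = 0" for j
      using comm[of "Inl a0" "Inr j"]
      by (simp add: sum_UNIV_plus w_def X1z cross1 cross2)
    have X2z: "X$Inr i$Inr j = 0" for i j
      using assms(5)
    proof
      assume GH: "GSSP H"
      define A2 :: "real^'b^'b" where "A2 = (\<chi> i j. A$Inr i$Inr j)"
      define X2 :: "real^'b^'b" where "X2 = (\<chi> i j. X$Inr i$Inr j)"
      have A2S: "A2 \<in> S_graph H"
        unfolding S_graph_def
      proof (intro CollectI conjI allI impI)
        show "transpose A2 = A2" by (simp add: vec_eq_iff transpose_def A2_def AT)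
        fix i j :: 'b assume "i \<noteq> j"
        then show "(A2$i$j \<noteq> 0) = H i j" using Asupp[of "Inr i" "Inr j"] by (simp add: A2_def)
      qed
      have "SSP A2" using GH A2S by (simp add: GSSP_def)
      moreover have "transpose X2 = X2" by (simp add: vec_eq_iff transpose_def X2_def XT)
      moreover have "\<forall>i j. A2$i$j * X2$i$j = 0" by (simp add: A2_def X2_def XA)
      moreover have "\<forall>i. X2$i$i = 0" by (simp add: X2_def Xd)
      moreover have "A2 ** X2 - X2 ** A2 = 0"
      proof -
        have "(A2 ** X2)$i$j = (X2 ** A2)$i$j" for i j
          using comm[of "Inr i" "Inr j"]
          by (simp add: mat_mult_nth sum_UNIV_plus A2_def X2_def cross1 cross2)
        then show ?thesis by (simp add: vec_eq_iff)
      qed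
      ultimately have "X2 = 0" unfolding SSP_def by blast
      then show ?thesis by (metis X2_def vec_lambda_beta zero_index)
    next
      assume T: "trees_odd_unicyclic (graph_complement H)"
      define y where "y i j = w i * X$Inr i$Inr j * w j" for i j
      have "y i j = 0"
      proof (rule y_zero[where F = "graph_complement H"])
        show "y i j = y j i" for i j unfolding y_def using XT by simp
        show "y i i = 0" for i unfolding y_def using Xd by simp
        show "graph_complement H i j" if "y i j \<noteq> 0" for i j
        proof -
          have x: "X$Inr i$Inr j \<noteq> 0" using that by (auto simp: y_def)
          then have ij: "i \<noteq> j" using Xd by auto
          have "A$Inr i$Inr j = 0" using XA[of "Inr i" "Inr j"] x by simp
          then have "\<not> H i j" using Asupp[of "Inr i" "Inr j"] ij by simp
          then show ?thesis using ij by (simp add: graph_complement_def)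
        qed
        show "(\<Sum>j\<in>UNIV. y i j) = 0" for i
        proof -
          have "(\<Sum>j\<in>UNIV. y i j) = (\<Sum>j\<in>UNIV. w i * (w j * X$Inr j$Inr i))"
          proof (rule sum.cong)
            fix j show "y i j = w i * (w j * X$Inr j$Inr i)"
              unfolding y_def using XT[of "Inr i" "Inr j"] by simp
          qed simp
          also have "\<dots> = w i * (\<Sum>j\<in>UNIV. w j * X$Inr j$Inr i)"
            by (rule sum_distrib_left[symmetric])
          also have "\<dots> = 0" using BX[of i] by simp
          finally show ?thesis .
        qed
        show "trees_odd_unicyclic (graph_complement H)" by (rule T)
      qed
      then show ?thesis using wnz[of i] wnz[of j] by (simp add: y_def)
    qed
    show "X = 0"
      unfolding vec_eq_iff
    proof (intro allI)
      fix i j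
      show "X$i$j = 0$i$j"
        by (cases i; cases j) (simp_all add: X1z X2z cross1 cross2)
    qed
  qed
qed

end
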